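(* Let $G$ be a finite group with identity $e$ and $H$ a normal subgroup of $G$ with $|H|=3$. Then the following two conditions are equivalent: (a) for every $x\in G\setminus H$, one has $x^2\in H$ and the coset $Hx$ contains an element of order at least $3$; (b) there exist $n\ge 0$ and an isomorphism $G\cong\mathbb{Z}_2^n\times\mathbb{Z}_3$ mapping $H$ onto the subgroup $\{(0,\dots,0,0),(0,\dots,0,1),(0,\dots,0,2)\}=\{0\}^n\times\mathbb{Z}_3$. *)

theory Defs
  imports "HOL-Algebra.Elementary_Groups" "HOL-Algebra.Multiplicative_Group" "HOL-Algebra.Product_Groups"
begin

definition Z2n_Z3 :: "nat \<Rightarrow> ((nat \<Rightarrow> int) \<times> int) monoid" where
  "Z2n_Z3 n = product_group {..<n} (\<lambda>_. integer_mod_group 2) \<times>\<times> integer_mod_group 3"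

definition Z3_factor :: "nat \<Rightarrow> ((nat \<Rightarrow> int) \<times> int) set" where
  "Z3_factor n = {\<one>\<^bsub>product_group {..<n} (\<lambda>_. integer_mod_group 2)\<^esub>} \<times> carrier (integer_mod_group 3)"

end

theory Submission
  imports Defs
begin


context group begin

lemma ord_ge3_iff:
  assumes "finite (carrier G)" "y \<in> carrier G"
  shows "ord y \<ge> 3 \<longleftrightarrow> y \<otimes> y \<noteq> \<one>"
proof -
  have sq: "y [^] (2::nat) = y \<otimes> y" using assms(2) by (simp add: numeral_2_eq_2)
  have o1: "ord y \<ge> 1" using ord_ge_1 assms by blast
  have "y \<otimes> y = \<one> \<longleftrightarrow> ord y dvd 2" using pow_eq_id[OF assms(2), of 2] sq by simp
  moreover have "ord y dvd 2 \<longleftrightarrow> ord y \<le> 2"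
  proof
    assume "ord y dvd 2" then show "ord y \<le> 2" by (simp add: dvd_imp_le)
  next
    assume "ord y \<le> 2" then have "ord y = 1 \<or> ord y = 2" using o1 by linarith
    then show "ord y dvd 2" by auto
  qed
  ultimately show ?thesis by auto
qed

lemma H3:
  assumes "subgroup H G" "card H = 3"
  shows "\<exists>h. h \<in> carrier G \<and> h \<noteq> \<one> \<and> h \<otimes> h \<noteq> \<one> \<and> h \<otimes> h \<otimes> h = \<one> \<and> H = {\<one>, h, h \<otimes> h}"
proof -
  have fin: "finite H"
  proof (rule ccontr)
    assume "infinite H" then have "card H = 0" by simp
    with assms(2) show False by simp
  qed
  have sub: "H \<subseteq> carrier G" by (rule subgroup.subset[OF assms(1)])
  have one: "\<one> \<in> H" by (rule subgroup.one_closed[OF assms(1)])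
  have cl: "\<And>a b. a \<in> H \<Longrightarrow> b \<in> H \<Longrightarrow> a \<otimes> b \<in> H" by (rule subgroup.m_closed[OF assms(1)])
  obtain h where h: "h \<in> H" "h \<noteq> \<one>"
  proof -
    have "H \<noteq> {\<one>}"
    proof
      assume "H = {\<one>}" then have "card H = 1" by simp
      with assms(2) show False by simp
    qed
    then show ?thesis using that one by blast
  qed
  have hG: "h \<in> carrier G" using h sub by blast
  have hh_ne_h: "h \<otimes> h \<noteq> h" using hG h(2) by simp
  have three: "\<And>k. k \<in> H \<Longrightarrow> k \<noteq> \<one> \<Longrightarrow> k \<noteq> h \<Longrightarrow> H = {\<one>, h, k}"
  proof -
    fix k assume k: "k \<in> H" "k \<noteq> \<one>" "k \<noteq> h"
    have c: "card {\<one>, h, k} = card H" using k h assms(2) by auto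
    have s: "{\<one>, h, k} \<subseteq> H" using k h one by auto
    show "H = {\<one>, h, k}" using card_subset_eq[OF fin s c] by simp
  qed
  have hh1: "h \<otimes> h \<noteq> \<one>"
  proof
    assume hh: "h \<otimes> h = \<one>"
    obtain k where k: "k \<in> H" "k \<noteq> \<one>" "k \<noteq> h"
    proof -
      have "card {\<one>, h} \<le> 2" by (simp add: card_insert_le_m1)
      then have "H \<noteq> {\<one>, h}" using assms(2) by auto
      then show ?thesis using that one h by blast
    qed
    have kG: "k \<in> carrier G" using k sub by blast
    have HH: "H = {\<one>, h, k}" using three k by blast
    have "h \<otimes> k \<in> H" using cl h k by blast
    moreover have "h \<otimes> k \<noteq> k" using hG kG h(2) by simp
    moreover have "h \<otimes> k \<noteq> h" using hG kG k(2) by simp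
    moreover have "h \<otimes> k \<noteq> \<one>"
    proof
      assume "h \<otimes> k = \<one>"
      then have "h \<otimes> k = h \<otimes> h" using hh by simp
      then have "k = h" using hG kG by simp
      then show False using k(3) by simp
    qed
    ultimately show False using HH by auto
  qed
  have HH: "H = {\<one>, h, h \<otimes> h}" using three[of "h \<otimes> h"] cl[OF h(1) h(1)] hh1 hh_ne_h by simp
  have "h \<otimes> h \<otimes> h \<in> H" using cl h by blast
  moreover have "h \<otimes> h \<otimes> h \<noteq> h \<otimes> h" using hG h(2) by simp
  moreover have "h \<otimes> h \<otimes> h \<noteq> h" using hG hh1 by simp
  ultimately have "h \<otimes> h \<otimes> h = \<one>" using HH by auto
  then show ?thesis using hG h hh1 HH by (intro exI[of _ h]) simp
qed

end


context group begin

lemma central_h: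
  assumes hG: "h \<in> carrier G" and h3: "h \<otimes> h \<otimes> h = \<one>" and h1: "h \<noteq> \<one>"
    and HH: "H = {\<one>, h, h \<otimes> h}"
    and sq: "\<And>x. x \<in> carrier G \<Longrightarrow> x \<otimes> x \<in> H"
    and cond: "\<And>x. x \<in> carrier G - H \<Longrightarrow> \<exists>y \<in> H #> x. y \<otimes> y \<noteq> \<one>"
    and xG: "x \<in> carrier G"
  shows "x \<otimes> h = h \<otimes> x"
proof (cases "x \<in> H")
  case True
  then show ?thesis using HH hG by (auto simp: m_assoc)
next
  case False
  then obtain y where y: "y \<in> H #> x" "y \<otimes> y \<noteq> \<one>" using cond xG by blast
  then obtain z where z: "z \<in> H" "y = z \<otimes> x" unfolding r_coset_def by blast
  have zG: "z \<in> carrier G" using z HH hG by auto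
  have yG: "y \<in> carrier G" using z zG xG by simp
  have zh: "z \<otimes> h = h \<otimes> z" using z HH hG by (auto simp: m_assoc)
  have yy: "y \<otimes> y = h \<or> y \<otimes> y = h \<otimes> h" using sq[OF yG] y(2) HH by auto
  have yh: "y \<otimes> h = h \<otimes> y"
  proof (cases "y \<otimes> y = h")
    case True
    then show ?thesis using yG by (metis m_assoc)
  next
    case False
    then have e: "y \<otimes> y = h \<otimes> h" using yy by blast
    have "h = (h \<otimes> h) \<otimes> (h \<otimes> h)" using h3 hG by (simp add: m_assoc[symmetric])
    also have "\<dots> = (y \<otimes> y) \<otimes> (y \<otimes> y)" using e by simp
    finally have hy: "h = (y \<otimes> y) \<otimes> (y \<otimes> y)" .
    show ?thesis by (subst (1 2) hy) (simp add: yG m_assoc)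
  qed
  have "z \<otimes> (x \<otimes> h) = y \<otimes> h" using z zG xG hG by (simp add: m_assoc)
  also have "\<dots> = h \<otimes> y" by (rule yh)
  also have "\<dots> = z \<otimes> (h \<otimes> x)" using z zG xG hG zh by (metis m_assoc)
  finally show ?thesis using zG xG hG by simp
qed

end


context group begin

lemma comm_from:
  assumes sub: "subgroup H G"
    and cen: "\<And>z g. z \<in> H \<Longrightarrow> g \<in> carrier G \<Longrightarrow> z \<otimes> g = g \<otimes> z"
    and sq: "\<And>x. x \<in> carrier G \<Longrightarrow> x \<otimes> x \<in> H"
    and k1: "\<And>k. k \<in> H \<Longrightarrow> k \<otimes> k = \<one> \<Longrightarrow> k = \<one>"
    and xG: "x \<in> carrier G" and yG: "y \<in> carrier G"
  shows "y \<otimes> x = x \<otimes> y"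
proof -
  have HG: "H \<subseteq> carrier G" by (rule subgroup.subset[OF sub])
  define a where "a = x \<otimes> x"
  define b where "b = y \<otimes> y"
  define c where "c = (x \<otimes> y) \<otimes> (x \<otimes> y)"
  have aH: "a \<in> H" unfolding a_def using sq xG by simp
  have bH: "b \<in> H" unfolding b_def using sq yG by simp
  have cH: "c \<in> H" unfolding c_def using sq xG yG by simp
  have aG: "a \<in> carrier G" using aH HG by blast
  have bG: "b \<in> carrier G" using bH HG by blast
  have cG: "c \<in> carrier G" using cH HG by blast
  have E1: "a \<otimes> (y \<otimes> x) \<otimes> b = x \<otimes> c \<otimes> y"
    unfolding a_def b_def c_def using xG yG by (simp add: m_assoc)
  have E2: "(a \<otimes> b) \<otimes> (y \<otimes> x) = c \<otimes> (x \<otimes> y)"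
  proof -
    have "(a \<otimes> b) \<otimes> (y \<otimes> x) = a \<otimes> (b \<otimes> (y \<otimes> x))" using aG bG xG yG by (simp add: m_assoc)
    also have "\<dots> = a \<otimes> ((y \<otimes> x) \<otimes> b)" using cen[OF bH, of "y \<otimes> x"] xG yG by simp
    also have "\<dots> = x \<otimes> c \<otimes> y" using E1 aG bG xG yG by (simp add: m_assoc)
    also have "\<dots> = c \<otimes> x \<otimes> y" using cen[OF cH xG] by simp
    finally show ?thesis using cG xG yG by (simp add: m_assoc)
  qed
  define k where "k = inv (a \<otimes> b) \<otimes> c"
  have kH: "k \<in> H" unfolding k_def using sub aH bH cH
    by (simp add: subgroup.m_closed subgroup.m_inv_closed)
  have kG: "k \<in> carrier G" using kH HG by blast
  have E3: "y \<otimes> x = k \<otimes> (x \<otimes> y)"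
  proof -
    have "k \<otimes> (x \<otimes> y) = inv (a \<otimes> b) \<otimes> (c \<otimes> (x \<otimes> y))" unfolding k_def using aG bG cG xG yG by (simp add: m_assoc)
    also have "\<dots> = inv (a \<otimes> b) \<otimes> ((a \<otimes> b) \<otimes> (y \<otimes> x))" using E2 by simp
    also have "\<dots> = (inv (a \<otimes> b) \<otimes> (a \<otimes> b)) \<otimes> (y \<otimes> x)" using aG bG xG yG by (simp only: m_assoc m_closed inv_closed)
    also have "\<dots> = y \<otimes> x" using aG bG xG yG by simp
    finally show ?thesis by simp
  qed
  have "y \<otimes> a = (y \<otimes> x) \<otimes> x" unfolding a_def using xG yG by (simp add: m_assoc)
  also have "\<dots> = k \<otimes> x \<otimes> (y \<otimes> x)" using E3 kG xG yG by (simp add: m_assoc)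
  also have "\<dots> = k \<otimes> x \<otimes> (k \<otimes> (x \<otimes> y))" using E3 by simp
  also have "\<dots> = k \<otimes> ((x \<otimes> k) \<otimes> (x \<otimes> y))" using kG xG yG by (simp add: m_assoc)
  also have "\<dots> = k \<otimes> ((k \<otimes> x) \<otimes> (x \<otimes> y))" using cen[OF kH xG] by simp
  also have "\<dots> = k \<otimes> (k \<otimes> x) \<otimes> (x \<otimes> y)" using kG xG yG by (simp add: m_assoc)
  also have "\<dots> = (k \<otimes> k) \<otimes> (a \<otimes> y)" unfolding a_def using kG xG yG by (simp add: m_assoc)
  also have "\<dots> = (k \<otimes> k) \<otimes> (y \<otimes> a)" using cen[OF aH yG] by simp
  finally have "y \<otimes> a = (k \<otimes> k) \<otimes> (y \<otimes> a)" .
  then have "k \<otimes> k = \<one>" using kG yG aG by (metis m_closed r_cancel_one')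
  then have "k = \<one>" using k1 kH by blast
  then show ?thesis using E3 xG yG by simp
qed

end


definition e2 :: "('a, 'b) monoid_scheme \<Rightarrow> 'a \<Rightarrow> int \<Rightarrow> 'a" where
  "e2 G a v = (if v = 0 then \<one>\<^bsub>G\<^esub> else a)"

definition psi :: "('a, 'b) monoid_scheme \<Rightarrow> nat \<Rightarrow> (nat \<Rightarrow> 'a) \<Rightarrow> (nat \<Rightarrow> int) \<Rightarrow> 'a" where
  "psi G n a v = finprod G (\<lambda>i. e2 G (a i) (v i)) {..<n}"

abbreviation C2 :: "nat \<Rightarrow> (nat \<Rightarrow> int) set" where
  "C2 n \<equiv> carrier (product_group {..<n} (\<lambda>_. integer_mod_group 2))"

lemma C2_eq: "C2 n = (\<Pi>\<^sub>E i\<in>{..<n}. {0..<2})"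
  by (simp add: carrier_integer_mod_group)

lemma card_C2: "card (C2 n) = 2 ^ n"
  by (simp add: card_PiE carrier_integer_mod_group)

lemma int3: "(k::int) \<in> {0..<3} \<Longrightarrow> k = 0 \<or> k = 1 \<or> k = 2" by auto

context comm_group begin

lemma e2_closed [simp]: "a \<in> carrier G \<Longrightarrow> e2 G a v \<in> carrier G"
  by (simp add: e2_def)

lemma psi_closed [simp]: "(\<And>i. i < n \<Longrightarrow> a i \<in> carrier G) \<Longrightarrow> psi G n a v \<in> carrier G"
  unfolding psi_def by (rule finprod_closed) auto

lemma e2_add:
  assumes "a \<in> carrier G" "a \<otimes> a = \<one>" "v \<in> {0..<2}" "w \<in> {0..<2}"
  shows "e2 G a ((v + w) mod 2) = e2 G a v \<otimes> e2 G a w"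
proof -
  have "v = 0 \<or> v = 1" "w = 0 \<or> w = 1" using assms(3,4) by auto
  then show ?thesis using assms(1,2) by (auto simp: e2_def)
qed

lemma psi_cong:
  assumes "\<And>i. i < n \<Longrightarrow> a i \<in> carrier G" "\<And>i. i < n \<Longrightarrow> a i = b i" "\<And>i. i < n \<Longrightarrow> v i = w i"
  shows "psi G n a v = psi G n b w"
  unfolding psi_def using assms by (intro finprod_cong') (auto simp: Pi_def)

lemma psi_hom:
  assumes a: "\<And>i. i < n \<Longrightarrow> a i \<in> carrier G \<and> a i \<otimes> a i = \<one>"
    and v: "v \<in> C2 n" and w: "w \<in> C2 n"
  shows "psi G n a (\<lambda>i\<in>{..<n}. (v i + w i) mod 2) = psi G n a v \<otimes> psi G n a w"
proof -
  have "psi G n a (\<lambda>i\<in>{..<n}. (v i + w i) mod 2) = finprod G (\<lambda>i. e2 G (a i) (v i) \<otimes> e2 G (a i) (w i)) {..<n}"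
    unfolding psi_def
  proof (intro finprod_cong')
    fix i assume i: "i \<in> {..<n}"
    then have "v i \<in> {0..<2}" "w i \<in> {0..<2}" using v w by (auto simp: PiE_iff carrier_integer_mod_group)
    then show "e2 G (a i) ((\<lambda>i\<in>{..<n}. (v i + w i) mod 2) i) = e2 G (a i) (v i) \<otimes> e2 G (a i) (w i)"
      using i a[of i] e2_add by auto
  qed (use a in \<open>auto simp: Pi_def\<close>)
  also have "\<dots> = psi G n a v \<otimes> psi G n a w"
    unfolding psi_def by (rule finprod_multf) (use a in \<open>auto simp: Pi_def\<close>)
  finally show ?thesis .
qed

lemma psi_sq:
  assumes a: "\<And>i. i < n \<Longrightarrow> a i \<in> carrier G \<and> a i \<otimes> a i = \<one>"
  shows "psi G n a v \<otimes> psi G n a v = \<one>"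
proof -
  have "psi G n a v \<otimes> psi G n a v = finprod G (\<lambda>i. e2 G (a i) (v i) \<otimes> e2 G (a i) (v i)) {..<n}"
    unfolding psi_def by (rule finprod_multf[symmetric]) (use a in \<open>auto simp: Pi_def\<close>)
  also have "\<dots> = \<one>"
    by (rule finprod_one_eqI) (use a in \<open>auto simp: e2_def\<close>)
  finally show ?thesis .
qed

lemma psi_one: "psi G n a (\<lambda>i\<in>{..<n}. 0) = \<one>"
  unfolding psi_def by (rule finprod_one_eqI) (auto simp: e2_def)

lemma psi_Suc:
  assumes a: "\<And>i. i < Suc n \<Longrightarrow> a i \<in> carrier G"
  shows "psi G (Suc n) a v = e2 G (a n) (v n) \<otimes> psi G n a v"
  unfolding psi_def using a by (simp add: lessThan_Suc Pi_def)

end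

definition ok :: "('a, 'b) monoid_scheme \<Rightarrow> nat \<Rightarrow> (nat \<Rightarrow> 'a) \<Rightarrow> bool" where
  "ok G n a \<longleftrightarrow> (\<forall>i<n. a i \<in> carrier G \<and> a i \<otimes>\<^bsub>G\<^esub> a i = \<one>\<^bsub>G\<^esub>) \<and> inj_on (psi G n a) (C2 n)"

context comm_group begin

lemma ok_bound:
  assumes fin: "finite (carrier G)" and ok: "ok G n a"
  shows "n \<le> card (carrier G)"
proof -
  have a: "\<And>i. i < n \<Longrightarrow> a i \<in> carrier G" using ok by (auto simp: ok_def)
  have sub: "psi G n a ` C2 n \<subseteq> carrier G" using a by auto
  have "card (psi G n a ` C2 n) = 2 ^ n" using ok card_C2 by (simp add: ok_def card_image)
  moreover have "card (psi G n a ` C2 n) \<le> card (carrier G)" using card_mono[OF fin sub] .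
  moreover have "n < 2 ^ n" by (rule less_exp)
  ultimately show ?thesis by linarith
qed

lemma ok_0: "ok G 0 a"
  by (simp add: ok_def carrier_integer_mod_group)

lemma img_closed:
  assumes a: "\<And>i. i < n \<Longrightarrow> a i \<in> carrier G \<and> a i \<otimes> a i = \<one>"
    and p: "p \<in> psi G n a ` C2 n" and q: "q \<in> psi G n a ` C2 n" and b: "b \<in> carrier G"
    and bpq: "b \<otimes> p = q"
  shows "b \<in> psi G n a ` C2 n"
proof -
  obtain v where v: "v \<in> C2 n" "p = psi G n a v" using p by blast
  obtain w where w: "w \<in> C2 n" "q = psi G n a w" using q by blast
  have pG: "p \<in> carrier G" using v a by auto
  have qG: "q \<in> carrier G" using w a by auto
  have pp: "p \<otimes> p = \<one>" using v psi_sq a by auto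
  have "b = (p \<otimes> p) \<otimes> b" using pp b by simp
  also have "\<dots> = p \<otimes> (b \<otimes> p)" using pG b by (simp add: m_ac)
  also have "\<dots> = p \<otimes> q" using bpq by simp
  also have "\<dots> = psi G n a (\<lambda>i\<in>{..<n}. (v i + w i) mod 2)" using psi_hom[OF _ v(1) w(1)] a v w by auto
  finally have "b = psi G n a (\<lambda>i\<in>{..<n}. (v i + w i) mod 2)" .
  moreover have "(\<lambda>i\<in>{..<n}. (v i + w i) mod 2) \<in> C2 n"
    by (auto simp: carrier_integer_mod_group)
  ultimately show ?thesis by blast
qed

lemma ok_ext:
  assumes ok: "ok G N a" and b: "b \<in> carrier G" "b \<otimes> b = \<one>" and nb: "b \<notin> psi G N a ` C2 N"
  shows "ok G (Suc N) (a(N := b))"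
proof -
  let ?a = "a(N := b)"
  have a: "\<And>i. i < N \<Longrightarrow> a i \<in> carrier G \<and> a i \<otimes> a i = \<one>" using ok by (auto simp: ok_def)
  have inj: "inj_on (psi G N a) (C2 N)" using ok by (simp add: ok_def)
  have a': "\<forall>i<Suc N. ?a i \<in> carrier G \<and> ?a i \<otimes> ?a i = \<one>" using a b by (auto simp: less_Suc_eq)
  have ps: "\<And>v. psi G (Suc N) ?a v = e2 G b (v N) \<otimes> psi G N a (restrict v {..<N})"
  proof -
    fix v
    have "psi G (Suc N) ?a v = e2 G (?a N) (v N) \<otimes> psi G N ?a v"
      by (rule psi_Suc) (use a' in auto)
    also have "psi G N ?a v = psi G N a (restrict v {..<N})"
      by (rule psi_cong) (use a in auto)
    finally show "psi G (Suc N) ?a v = e2 G b (v N) \<otimes> psi G N a (restrict v {..<N})" by (simp only: fun_upd_same)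
  qed
  have "inj_on (psi G (Suc N) ?a) (C2 (Suc N))"
  proof (rule inj_onI)
    fix v w assume v: "v \<in> C2 (Suc N)" and w: "w \<in> C2 (Suc N)"
      and eq: "psi G (Suc N) ?a v = psi G (Suc N) ?a w"
    let ?v = "restrict v {..<N}" and ?w = "restrict w {..<N}"
    have v': "?v \<in> C2 N" using v by (auto simp: PiE_iff carrier_integer_mod_group)
    have w': "?w \<in> C2 N" using w by (auto simp: PiE_iff carrier_integer_mod_group)
    have "v N \<in> {0..<2}" using v by (simp add: PiE_iff carrier_integer_mod_group)
    then have vN: "v N = 0 \<or> v N = 1" by auto
    have "w N \<in> {0..<2}" using w by (simp add: PiE_iff carrier_integer_mod_group)
    then have wN: "w N = 0 \<or> w N = 1" by auto
    have pv: "psi G N a ?v \<in> carrier G" using a by auto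
    have pw: "psi G N a ?w \<in> carrier G" using a by auto
    have eq2: "e2 G b (v N) \<otimes> psi G N a ?v = e2 G b (w N) \<otimes> psi G N a ?w" using eq ps by simp
    show "v = w"
    proof (cases "v N = w N")
      case True
      then have "psi G N a ?v = psi G N a ?w" using eq2 pv pw b by simp
      then have vw: "?v = ?w" using inj_onD[OF inj _ v' w'] by simp
      show "v = w"
      proof
        fix i
        show "v i = w i"
        proof (cases "i < N")
          case True
          have "restrict v {..<N} i = restrict w {..<N} i" using vw by simp
          then show ?thesis using True by simp
        next
          case False
          show ?thesis
          proof (cases "i = N")
            case True then show ?thesis using \<open>v N = w N\<close> by simp
          next
            case False
            then have i: "i \<notin> {..<Suc N}" using \<open>\<not> i < N\<close> by simp
            have v2: "v \<in> (\<Pi>\<^sub>E i\<in>{..<Suc N}. carrier (integer_mod_group 2))" using v by (simp only: carrier_product_group)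
            have w2: "w \<in> (\<Pi>\<^sub>E i\<in>{..<Suc N}. carrier (integer_mod_group 2))" using w by (simp only: carrier_product_group)
            show ?thesis using PiE_arb[OF v2 i] PiE_arb[OF w2 i] by simp
          qed
        qed
      qed
    next
      case False
      then have "(v N = 1 \<and> w N = 0) \<or> (v N = 0 \<and> w N = 1)" using vN wN by auto
      then have "b \<in> psi G N a ` C2 N"
      proof
        assume "v N = 1 \<and> w N = 0"
        then have "b \<otimes> psi G N a ?v = psi G N a ?w" using eq2 pw by (simp add: e2_def)
        then show ?thesis using img_closed[OF a imageI[OF v'] imageI[OF w'] b(1)] by simp
      next
        assume "v N = 0 \<and> w N = 1"
        then have "b \<otimes> psi G N a ?w = psi G N a ?v" using eq2 pv by (simp add: e2_def)
        then show ?thesis using img_closed[OF a imageI[OF w'] imageI[OF v'] b(1)] by simp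
      qed
      then show ?thesis using nb by blast
    qed
  qed
  then show ?thesis using a' by (simp add: ok_def)
qed

lemma exists_max:
  assumes fin: "finite (carrier G)"
  shows "\<exists>N a. ok G N a \<and> psi G N a ` C2 N = {g \<in> carrier G. g \<otimes> g = \<one>}"
proof -
  define N where "N = (GREATEST n. \<exists>a. ok G n a)"
  have bnd: "\<And>n. (\<exists>a. ok G n a) \<Longrightarrow> n \<le> card (carrier G)" using ok_bound[OF fin] by blast
  have "\<exists>a. ok G N a" unfolding N_def by (rule GreatestI_nat[of _ 0]) (use ok_0 bnd in auto)
  then obtain a where okN: "ok G N a" by blast
  have a: "\<And>i. i < N \<Longrightarrow> a i \<in> carrier G \<and> a i \<otimes> a i = \<one>" using okN by (auto simp: ok_def)
  have "psi G N a ` C2 N = {g \<in> carrier G. g \<otimes> g = \<one>}"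
  proof
    show "psi G N a ` C2 N \<subseteq> {g \<in> carrier G. g \<otimes> g = \<one>}" using a psi_sq by auto
    show "{g \<in> carrier G. g \<otimes> g = \<one>} \<subseteq> psi G N a ` C2 N"
    proof (rule ccontr)
      assume "\<not> ?thesis"
      then obtain b where b: "b \<in> carrier G" "b \<otimes> b = \<one>" "b \<notin> psi G N a ` C2 N" by blast
      have "ok G (Suc N) (a(N := b))" by (rule ok_ext[OF okN b])
      then have "Suc N \<le> N" unfolding N_def by (intro Greatest_le_nat[of _ _ "card (carrier G)"]) (use bnd in auto)
      then show False by simp
    qed
  qed
  then show ?thesis using okN by blast
qed

end

context comm_group begin

lemma build_iso:
  assumes fin: "finite (carrier G)" and hG: "h \<in> carrier G" and h1: "h \<noteq> \<one>"
    and hh1: "h \<otimes> h \<noteq> \<one>" and h3: "h \<otimes> h \<otimes> h = \<one>" and HH: "H = {\<one>, h, h \<otimes> h}"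
    and sq: "\<And>x. x \<in> carrier G \<Longrightarrow> x \<otimes> x \<in> H"
  shows "\<exists>n \<phi>. \<phi> \<in> iso G (Z2n_Z3 n) \<and> \<phi> ` H = Z3_factor n"
proof -
  obtain N a where okN: "ok G N a" and img: "psi G N a ` C2 N = {g \<in> carrier G. g \<otimes> g = \<one>}"
    using exists_max[OF fin] by blast
  have a: "\<And>i. i < N \<Longrightarrow> a i \<in> carrier G \<and> a i \<otimes> a i = \<one>" using okN by (auto simp: ok_def)
  have inj: "inj_on (psi G N a) (C2 N)" using okN by (simp add: ok_def)
  have h3': "h \<otimes> (h \<otimes> h) = \<one>" using h3 hG by (simp add: m_assoc)
  have h4: "(h \<otimes> h) \<otimes> (h \<otimes> h) = h" using h3 hG by (simp add: m_assoc[symmetric])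
  have hh_h: "h \<otimes> h \<noteq> h" using hG h1 by simp
  define e3 where "e3 k = (if k = 0 then \<one> else if k = (1::int) then h else h \<otimes> h)" for k
  have e3G: "\<And>k. e3 k \<in> carrier G" using hG by (simp add: e3_def)
  have e3_add: "e3 ((k + l) mod 3) = e3 k \<otimes> e3 l" if "k \<in> {0..<3}" "l \<in> {0..<3}" for k l
  proof -
    have "k = 0 \<or> k = 1 \<or> k = 2" "l = 0 \<or> l = 1 \<or> l = 2" using int3 that by auto
    then show ?thesis using hG h3' h4 h3 by (auto simp: e3_def m_assoc)
  qed
  have e3_sq: "e3 k \<otimes> e3 k = (if k = 0 then \<one> else if k = 1 then h \<otimes> h else h)" for k
    using hG h4 by (simp add: e3_def)
  have Zc: "carrier (Z2n_Z3 N) = C2 N \<times> {0..<3}"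
    by (simp add: Z2n_Z3_def carrier_integer_mod_group)
  have Zm: "x \<otimes>\<^bsub>Z2n_Z3 N\<^esub> y = ((\<lambda>i\<in>{..<N}. (fst x i + fst y i) mod 2), (snd x + snd y) mod 3)" for x y
    by (simp add: Z2n_Z3_def mult_DirProd')
  define Phi where "Phi x = psi G N a (fst x) \<otimes> e3 (snd x)" for x
  have PhiG: "Phi x \<in> carrier G" for x unfolding Phi_def using a e3G by auto
  have hom: "Phi \<in> hom (Z2n_Z3 N) G"
  proof (rule homI)
    fix x y assume x: "x \<in> carrier (Z2n_Z3 N)" and y: "y \<in> carrier (Z2n_Z3 N)"
    have xs: "fst x \<in> C2 N" "snd x \<in> {0..<3}" using x Zc by auto
    have ys: "fst y \<in> C2 N" "snd y \<in> {0..<3}" using y Zc by auto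
    have "Phi (x \<otimes>\<^bsub>Z2n_Z3 N\<^esub> y) = (psi G N a (fst x) \<otimes> psi G N a (fst y)) \<otimes> (e3 (snd x) \<otimes> e3 (snd y))"
      unfolding Phi_def Zm using psi_hom[OF a xs(1) ys(1)] e3_add[OF xs(2) ys(2)] by simp
    also have "\<dots> = Phi x \<otimes> Phi y" unfolding Phi_def using a e3G by (simp add: m_ac)
    finally show "Phi (x \<otimes>\<^bsub>Z2n_Z3 N\<^esub> y) = Phi x \<otimes> Phi y" .
  qed (use PhiG in auto)
  have injPhi: "inj_on Phi (carrier (Z2n_Z3 N))"
  proof (rule inj_onI)
    fix x y assume x: "x \<in> carrier (Z2n_Z3 N)" and y: "y \<in> carrier (Z2n_Z3 N)" and eq: "Phi x = Phi y"
    have xs: "fst x \<in> C2 N" "snd x \<in> {0..<3}" using x Zc by auto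
    have ys: "fst y \<in> C2 N" "snd y \<in> {0..<3}" using y Zc by auto
    have sqx: "Phi x \<otimes> Phi x = e3 (snd x) \<otimes> e3 (snd x)"
    proof -
      have "Phi x \<otimes> Phi x = (psi G N a (fst x) \<otimes> psi G N a (fst x)) \<otimes> (e3 (snd x) \<otimes> e3 (snd x))"
        unfolding Phi_def using a e3G by (simp add: m_ac)
      then show ?thesis using psi_sq[OF a] e3G by simp
    qed
    have sqy: "Phi y \<otimes> Phi y = e3 (snd y) \<otimes> e3 (snd y)"
    proof -
      have "Phi y \<otimes> Phi y = (psi G N a (fst y) \<otimes> psi G N a (fst y)) \<otimes> (e3 (snd y) \<otimes> e3 (snd y))"
        unfolding Phi_def using a e3G by (simp add: m_ac)
      then show ?thesis using psi_sq[OF a] e3G by simp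
    qed
    have "e3 (snd x) \<otimes> e3 (snd x) = e3 (snd y) \<otimes> e3 (snd y)" using sqx sqy eq by simp
    then have "(if snd x = 0 then \<one> else if snd x = 1 then h \<otimes> h else h) = (if snd y = 0 then \<one> else if snd y = 1 then h \<otimes> h else h)"
      by (simp only: e3_sq)
    moreover have "snd x = 0 \<or> snd x = 1 \<or> snd x = 2" "snd y = 0 \<or> snd y = 1 \<or> snd y = 2" using int3[OF xs(2)] int3[OF ys(2)] by auto
    ultimately have s: "snd x = snd y" using h1 hh1 hh_h by (auto split: if_splits)
    then have "psi G N a (fst x) = psi G N a (fst y)" using eq unfolding Phi_def using a e3G by simp
    then have "fst x = fst y" using inj_onD[OF inj _ xs(1) ys(1)] by simp
    then show "x = y" using s by (simp add: prod_eq_iff)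
  qed
  have cube: "z \<otimes> z \<otimes> z = \<one>" if "z \<in> H" for z
  proof -
    have "z = \<one> \<or> z = h \<or> z = h \<otimes> h" using that HH by auto
    moreover have "(h \<otimes> h) \<otimes> (h \<otimes> h) \<otimes> (h \<otimes> h) = \<one>" using h4 h3' by simp
    ultimately show ?thesis using h3 by auto
  qed
  have surj: "carrier G \<subseteq> Phi ` carrier (Z2n_Z3 N)"
  proof
    fix g assume g: "g \<in> carrier G"
    define z where "z = g \<otimes> g"
    have zH: "z \<in> H" using sq g z_def by simp
    have zG: "z \<in> carrier G" using g z_def by simp
    define g3 where "g3 = g \<otimes> g \<otimes> g"
    have g3G: "g3 \<in> carrier G" using g g3_def by simp
    have "g3 \<otimes> g3 = z \<otimes> z \<otimes> z" unfolding g3_def z_def using g by (simp add: m_ac)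
    then have "g3 \<otimes> g3 = \<one>" using cube[OF zH] by simp
    then have "g3 \<in> psi G N a ` C2 N" using img g3G by simp
    then obtain v where v: "v \<in> C2 N" "psi G N a v = g3" by auto
    have zzH: "z \<otimes> z \<in> H" using sq zG by simp
    then obtain k where k: "k \<in> {0..<3}" "e3 k = z \<otimes> z"
    proof -
      have "z \<otimes> z = e3 0 \<or> z \<otimes> z = e3 1 \<or> z \<otimes> z = e3 2" using zzH HH by (auto simp: e3_def)
      then show ?thesis using that[of 0] that[of 1] that[of 2] by auto
    qed
    have "Phi (v, k) = g3 \<otimes> (z \<otimes> z)" unfolding Phi_def using v k by simp
    also have "\<dots> = (z \<otimes> z \<otimes> z) \<otimes> g" unfolding g3_def z_def using g by (simp add: m_ac)
    also have "\<dots> = g" using cube[OF zH] g by simp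
    finally have "Phi (v, k) = g" .
    moreover have "(v, k) \<in> carrier (Z2n_Z3 N)" using v k Zc by simp
    ultimately show "g \<in> Phi ` carrier (Z2n_Z3 N)" by force
  qed
  have bij: "bij_betw Phi (carrier (Z2n_Z3 N)) (carrier G)"
    unfolding bij_betw_def using injPhi surj PhiG by auto
  have isoPhi: "Phi \<in> iso (Z2n_Z3 N) G" using hom bij by (rule isoI)
  have grpZ: "group (Z2n_Z3 N)"
    unfolding Z2n_Z3_def by (intro DirProd_group product_group) simp_all
  have iso2: "inv_into (carrier (Z2n_Z3 N)) Phi \<in> iso G (Z2n_Z3 N)"
    by (rule group.iso_set_sym[OF grpZ isoPhi])
  have Z3c: "Z3_factor N = {(\<lambda>i\<in>{..<N}. 0)} \<times> {0..<3}"
    by (simp add: Z3_factor_def carrier_integer_mod_group)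
  have one_in: "(\<lambda>i\<in>{..<N}. (0::int)) \<in> C2 N"
    unfolding carrier_product_group restrict_PiE_iff by (simp add: carrier_integer_mod_group)
  have Z3sub: "Z3_factor N \<subseteq> carrier (Z2n_Z3 N)" using one_in unfolding Z3c Zc by blast
  have "Phi ` Z3_factor N = e3 ` {0..<3}" unfolding Z3c Phi_def by (force simp: psi_one e3G)
  also have "e3 ` {0..<3} = H"
  proof -
    have "{0..<3::int} = {0, 1, 2}" by auto
    then show ?thesis using HH by (auto simp: e3_def)
  qed
  finally have PZ: "Phi ` Z3_factor N = H" .
  have "inv_into (carrier (Z2n_Z3 N)) Phi ` H = Z3_factor N"
    using PZ inv_into_image_cancel[OF injPhi Z3sub] by simp
  then show ?thesis using iso2 by blast
qed

end

theorem lemma5p1: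
  fixes G (structure) and H :: "'a set"
  assumes "group G" and "finite (carrier G)" and "H \<lhd> G" and "card H = 3"
  shows "(\<forall>x \<in> carrier G - H. x \<otimes> x \<in> H \<and> (\<exists>y \<in> H #> x. group.ord G y \<ge> 3))
     \<longleftrightarrow> (\<exists>(n::nat) \<phi>. \<phi> \<in> iso G (Z2n_Z3 n) \<and> \<phi> ` H = Z3_factor n)"
proof -
  interpret group G by (rule assms(1))
  have fin: "finite (carrier G)" by (rule assms(2))
  have subH: "subgroup H G" by (rule normal_imp_subgroup[OF assms(3)])
  have HG: "H \<subseteq> carrier G" by (rule subgroup.subset[OF subH])
  have rc: "H #> x \<subseteq> carrier G" if "x \<in> carrier G" for x
    using HG that unfolding r_coset_def by auto
  show ?thesis
  proof
    assume A: "\<forall>x \<in> carrier G - H. x \<otimes> x \<in> H \<and> (\<exists>y \<in> H #> x. ord y \<ge> 3)"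
    obtain h where hG: "h \<in> carrier G" and h1: "h \<noteq> \<one>" and hh1: "h \<otimes> h \<noteq> \<one>"
      and h3: "h \<otimes> h \<otimes> h = \<one>" and HH: "H = {\<one>, h, h \<otimes> h}"
      using H3[OF subH assms(4)] by blast
    have sq: "x \<otimes> x \<in> H" if x: "x \<in> carrier G" for x
    proof (cases "x \<in> H")
      case True show ?thesis by (rule subgroup.m_closed[OF subH True True])
    next
      case False then show ?thesis using A x by blast
    qed
    have cond: "\<exists>y \<in> H #> x. y \<otimes> y \<noteq> \<one>" if x: "x \<in> carrier G - H" for x
    proof -
      obtain y where y: "y \<in> H #> x" "ord y \<ge> 3" using A x by blast
      have "y \<in> carrier G" using y(1) rc x by blast
      then have "y \<otimes> y \<noteq> \<one>" using ord_ge3_iff[OF fin] y(2) by blast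
      then show ?thesis using y(1) by blast
    qed
    have cen_h: "x \<otimes> h = h \<otimes> x" if "x \<in> carrier G" for x
      by (rule central_h[OF hG h3 h1 HH sq cond that])
    have cen: "z \<otimes> g = g \<otimes> z" if z: "z \<in> H" and g: "g \<in> carrier G" for z g
    proof -
      have "z = \<one> \<or> z = h \<or> z = h \<otimes> h" using z HH by auto
      moreover have "(h \<otimes> h) \<otimes> g = g \<otimes> (h \<otimes> h)"
      proof -
        have "(h \<otimes> h) \<otimes> g = h \<otimes> (h \<otimes> g)" using hG g by (simp add: m_assoc)
        also have "\<dots> = h \<otimes> (g \<otimes> h)" using cen_h[OF g] by simp
        also have "\<dots> = (h \<otimes> g) \<otimes> h" using hG g by (simp add: m_assoc)
        also have "\<dots> = (g \<otimes> h) \<otimes> h" using cen_h[OF g] by simp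
        also have "\<dots> = g \<otimes> (h \<otimes> h)" using hG g by (simp add: m_assoc)
        finally show ?thesis .
      qed
      ultimately show ?thesis using cen_h[OF g] g by auto
    qed
    have h4: "(h \<otimes> h) \<otimes> (h \<otimes> h) = h" using h3 hG by (simp add: m_assoc[symmetric])
    have k1: "k = \<one>" if "k \<in> H" "k \<otimes> k = \<one>" for k
    proof -
      have "k = \<one> \<or> k = h \<or> k = h \<otimes> h" using that(1) HH by auto
      then show ?thesis using that(2) hh1 h4 h1 by auto
    qed
    have "comm_group G"
      by (rule group_comm_groupI) (rule comm_from[OF subH cen sq k1]; assumption)
    then interpret C: comm_group G .
    show "\<exists>(n::nat) \<phi>. \<phi> \<in> iso G (Z2n_Z3 n) \<and> \<phi> ` H = Z3_factor n"
      by (rule C.build_iso[OF fin hG h1 hh1 h3 HH sq])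
  next
    assume "\<exists>(n::nat) \<phi>. \<phi> \<in> iso G (Z2n_Z3 n) \<and> \<phi> ` H = Z3_factor n"
    then obtain n \<phi> where iso: "\<phi> \<in> iso G (Z2n_Z3 n)" and img: "\<phi> ` H = Z3_factor n" by blast
    have hom: "\<phi> \<in> hom G (Z2n_Z3 n)" using iso by (simp add: iso_def)
    have inj: "inj_on \<phi> (carrier G)" using iso by (simp add: iso_def bij_betw_def)
    have grpZ: "group (Z2n_Z3 n)"
      unfolding Z2n_Z3_def by (intro DirProd_group product_group) simp_all
    have Zc: "carrier (Z2n_Z3 n) = C2 n \<times> {0..<3}"
      by (simp add: Z2n_Z3_def carrier_integer_mod_group)
    have Zm: "x \<otimes>\<^bsub>Z2n_Z3 n\<^esub> y = ((\<lambda>i\<in>{..<n}. (fst x i + fst y i) mod 2), (snd x + snd y) mod 3)" for x y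
      by (simp add: Z2n_Z3_def mult_DirProd')
    have Z1: "\<one>\<^bsub>Z2n_Z3 n\<^esub> = ((\<lambda>i\<in>{..<n}. 0), 0)"
      by (simp add: Z2n_Z3_def)
    have Z3c: "Z3_factor n = {(\<lambda>i\<in>{..<n}. 0)} \<times> {0..<3}"
      by (simp add: Z3_factor_def carrier_integer_mod_group)
    have phiC: "\<phi> g \<in> carrier (Z2n_Z3 n)" if "g \<in> carrier G" for g
      using hom that by (auto simp: hom_def)
    have phi1: "\<phi> \<one> = \<one>\<^bsub>Z2n_Z3 n\<^esub>" by (rule hom_one[OF hom assms(1) grpZ])
    have memH: "g \<in> H" if g: "g \<in> carrier G" and f: "fst (\<phi> g) = (\<lambda>i\<in>{..<n}. 0)" for g
    proof -
      have "snd (\<phi> g) \<in> {0..<3}" using phiC[OF g] Zc by auto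
      then have "\<phi> g \<in> Z3_factor n" using f unfolding Z3c by (simp add: mem_Times_iff)
      then have "\<phi> g \<in> \<phi> ` H" using img by simp
      then obtain z where z: "z \<in> H" "\<phi> z = \<phi> g" by (metis imageE)
      have "z = g" using inj_onD[OF inj z(2)] z(1) HG g by blast
      then show ?thesis using z(1) by simp
    qed
    show "\<forall>x \<in> carrier G - H. x \<otimes> x \<in> H \<and> (\<exists>y \<in> H #> x. ord y \<ge> 3)"
    proof
      fix x assume xx: "x \<in> carrier G - H"
      then have x: "x \<in> carrier G" by blast
      have "fst (\<phi> (x \<otimes> x)) = (\<lambda>i\<in>{..<n}. (fst (\<phi> x) i + fst (\<phi> x) i) mod 2)"
        using hom_mult[OF hom x x] Zm by simp
      also have "\<dots> = (\<lambda>i\<in>{..<n}. 0)"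
        by (rule restrict_ext) presburger
      finally have "x \<otimes> x \<in> H" using memH x by simp
      moreover have "\<exists>y \<in> H #> x. ord y \<ge> 3"
      proof -
        define k where "k = snd (\<phi> x)"
        define c where "c = (1 - k) mod 3"
        have "((\<lambda>i\<in>{..<n}. 0), c) \<in> Z3_factor n" unfolding Z3c c_def by simp
        then have "((\<lambda>i\<in>{..<n}. 0), c) \<in> \<phi> ` H" using img by simp
        then obtain z where z: "z \<in> H" "\<phi> z = ((\<lambda>i\<in>{..<n}. 0), c)" by (metis imageE)
        have zG: "z \<in> carrier G" using z(1) HG by blast
        define y where "y = z \<otimes> x"
        have yH: "y \<in> H #> x" unfolding y_def r_coset_def using z(1) by blast
        have yG: "y \<in> carrier G" unfolding y_def using zG x by simp
        have sy: "snd (\<phi> y) = 1"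
          unfolding y_def using hom_mult[OF hom zG x] Zm z(2) unfolding c_def k_def by simp presburger
        have "snd (\<phi> (y \<otimes> y)) = 2" using hom_mult[OF hom yG yG] Zm sy by simp
        moreover have "snd (\<phi> \<one>) = 0" using phi1 Z1 by simp
        ultimately have "y \<otimes> y \<noteq> \<one>" by auto
        then have "ord y \<ge> 3" using ord_ge3_iff[OF fin yG] by blast
        then show ?thesis using yH by blast
      qed
      ultimately show "x \<otimes> x \<in> H \<and> (\<exists>y \<in> H #> x. ord y \<ge> 3)" by blast
    qed
  qed
qed

end
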